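(* For any set $\Phi\cup\{\psi\}$ of $\mathsf{BSML}^{\oslash}$-formulas, if $\Phi\vdash\psi$ in the natural deduction system $\mathcal{S}^{\oslash}$ described below, then $\Phi\models\psi$.
   Context: Syntax: $\mathsf{BSML}^{\oslash}$-formulas $\phi ::= p \mid \neg\phi \mid (\phi\wedge\phi) \mid (\phi\vee\phi) \mid \Diamond\phi \mid \mathrm{NE}\mid\oslash\phi$. Classical formulas ($\alpha,\beta$): built from $p,\neg,\wedge,\vee,\Diamond$. $\Box\phi:=\neg\Diamond\neg\phi$; $\bot:=p\wedge\neg p$; $\bot\!\!\!\bot:=\bot\wedge\mathrm{NE}$. Semantics on Kripke models $M=(W,R,V)$, states $s\subseteq W$: $s\models p$ iff $s\subseteq V(p)$; $s\dashv p$ iff $s\cap V(p)=\emptyset$; $s\models\mathrm{NE}$ iff $s\ne\emptyset$; $s\dashv\mathrm{NE}$ iff $s=\emptyset$; $s\models\neg\phi$ iff $s\dashv\phi$; $s\dashv\neg\phi$ iff $s\models\phi$; $s\models\phi\wedge\psi$ iff both; $s\dashv\phi\wedge\psi$ iff $s=t\cup u$, $t\dashv\phi$, $u\dashv\psi$; $s\models\phi\vee\psi$ iff $s=t\cup u$, $t\models\phi$, $u\models\psi$; $s\dashv\phi\vee\psi$ iff $s\dashv\phi$ and $s\dashv\psi$; $s\models\Diamond\phi$ iff each $w\in s$ has a nonempty $t\subseteq R[w]$ with $t\models\phi$; $s\dashv\Diamond\phi$ iff $R[w]\dashv\phi$ for all $w\in s$; $s\models\oslash\phi$ iff $s\models\phi$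 or $s=\emptyset$; $s\dashv\oslash\phi$ iff $s\dashv\phi$. $\Phi\models\psi$ iff every state supporting all of $\Phi$ supports $\psi$. An occurrence $[\psi]$ of a subformula in $\phi$ is called distributive if it is not within the scope of any $\neg$ or $\Diamond$ in $\phi$ (recall $\Box=\neg\Diamond\neg$); $\phi[\chi/\psi]$ denotes replacing that occurrence by $\chi$. System $\mathcal{S}^{\oslash}$ ($\Phi\vdash\psi$ iff some natural deduction derivation of $\psi$ has all undischarged assumptions in $\Phi$; "$A\Leftrightarrow B$" = both one-step rules): (a) $\wedge$I; $\wedge$E. (b) $\neg$I: from a derivation of $\bot$ from $\alpha$ infer $\neg\alpha$ discharging $\alpha$, provided its undischarged assumptions contain no $\mathrm{NE}$; from $\alpha,\neg\alpha$ infer $\beta$; $\neg\neg\phi\Leftrightarrow\phi$; $\neg(\phi\wedge\psi)\Leftrightarrow\neg\phi\vee\neg\psi$; $\neg(\phi\vee\psi)\Leftrightarrow\neg\phi\wedge\neg\psi$; $\neg\mathrm{NE}\Leftrightarrow\bot$. (c) from $\phi$ infer $\phi\vee\psi$ if $\psi$ contains no $\mathrm{NE}$; from $\phi$ infer $\phi\vee\phi$; from $\phi\vee\psi$ infer $\psi\vee\phi$; $\vee$E: from $\phi\vee\psi$ and derivations of $\chi$ from $\phi$ and from $\psi$ infer $\chi$ (discharging), provided the undischarged assumptions of the subderivations contain no $\mathrm{NE}$; from $\phi\vee\psi$ and a derivation of $\chi$ from $\psi$ whose undischarged assumptions contain no $\mathrm{NE}$ infer $\phi\vee\chi$. (d)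 from $\bot\vee\phi$ infer $\phi$; from $\bot\!\!\!\bot\vee\phi$ infer any $\psi$. (e) if $\psi$ derivable from $\phi$ alone, from $\Diamond\phi$ infer $\Diamond\psi$; if $\psi$ derivable from $\phi_1,\dots,\phi_n$ alone, from $\Box\phi_1,\dots,\Box\phi_n$ infer $\Box\psi$; $\neg\Diamond\phi\Leftrightarrow\Box\neg\phi$. (f) from $\Diamond(\phi\vee(\psi\wedge\mathrm{NE}))$ infer $\Diamond\psi$; from $\Diamond\phi,\Diamond\psi$ infer $\Diamond(\phi\vee\psi)$; from $\Box(\phi\wedge\mathrm{NE})$ infer $\Diamond\phi$; from $\Box\phi,\Diamond\psi$ infer $\Box(\phi\vee\psi)$. ($\oslash$) axiom $\oslash\mathrm{NE}$; from $\bot$ infer $\oslash\phi$; from $\phi$ infer $\oslash\phi$; $\oslash$E: for a distributive occurrence $[\oslash\psi]$ in $\phi$, from $\phi$, a derivation of $\chi$ from $\phi[\psi/\oslash\psi]$ and a derivation of $\chi$ from $\phi[\bot/\oslash\psi]$, infer $\chi$ (discharging); $\neg\oslash\phi\Leftrightarrow\neg\phi$; for a distributive occurrence $[\oslash\psi]$ in $\phi$: from $\Diamond\phi$ infer $\Diamond\phi[\psi/\oslash\psi]\vee\Diamond\phi[\bot/\oslash\psi]$, and from $\Box\phi$ infer $\Box\phi[\psi/\oslash\psi]\vee\Box\phi[\bot/\oslash\psi]$. *)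

theory Defs
  imports Main
begin

text \<open>Propositional variables are natural numbers. The constructor PWd is the
operator written as a slashed circle in the paper.\<close>

datatype form =
    PAtom nat
  | PNeg form
  | PConj form form
  | PDisj form form
  | PDia form
  | PNE
  | PWd form

fun classical :: "form \<Rightarrow> bool" where
  "classical (PAtom p) = True"
| "classical (PNeg a) = classical a"
| "classical (PConj a b) = (classical a \<and> classical b)"
| "classical (PDisj a b) = (classical a \<and> classical b)"
| "classical (PDia a) = classical a"
| "classical PNE = False"
| "classical (PWd a) = False"

fun noNE :: "form \<Rightarrow> bool" where
  "noNE (PAtom p) = True"
| "noNE (PNeg a) = noNE a"
| "noNE (PConj a b) = (noNE a \<and> noNE b)"
| "noNE (PDisj a b) = (noNE a \<and> noNE b)"
| "noNE (PDia a) = noNE a"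
| "noNE PNE = False"
| "noNE (PWd a) = noNE a"

definition PBox :: "form \<Rightarrow> form" where
  "PBox f = PNeg (PDia (PNeg f))"

definition PBot :: form where
  "PBot = PConj (PAtom 0) (PNeg (PAtom 0))"

definition PBBot :: form where
  "PBBot = PConj PBot PNE"

definition kmodel :: "'w set \<Rightarrow> ('w \<times> 'w) set \<Rightarrow> (nat \<Rightarrow> 'w set) \<Rightarrow> bool" where
  "kmodel W R V \<longleftrightarrow> R \<subseteq> W \<times> W \<and> (\<forall>p. V p \<subseteq> W)"

fun supp :: "('w \<times> 'w) set \<Rightarrow> (nat \<Rightarrow> 'w set) \<Rightarrow> 'w set \<Rightarrow> form \<Rightarrow> bool"
and anti :: "('w \<times> 'w) set \<Rightarrow> (nat \<Rightarrow> 'w set) \<Rightarrow> 'w set \<Rightarrow> form \<Rightarrow> bool" where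
  "supp R V s (PAtom p) = (s \<subseteq> V p)"
| "anti R V s (PAtom p) = (s \<inter> V p = {})"
| "supp R V s PNE = (s \<noteq> {})"
| "anti R V s PNE = (s = {})"
| "supp R V s (PNeg f) = anti R V s f"
| "anti R V s (PNeg f) = supp R V s f"
| "supp R V s (PConj f g) = (supp R V s f \<and> supp R V s g)"
| "anti R V s (PConj f g) = (\<exists>t u. s = t \<union> u \<and> anti R V t f \<and> anti R V u g)"
| "supp R V s (PDisj f g) = (\<exists>t u. s = t \<union> u \<and> supp R V t f \<and> supp R V u g)"
| "anti R V s (PDisj f g) = (anti R V s f \<and> anti R V s g)"
| "supp R V s (PDia f) = (\<forall>w\<in>s. \<exists>t. t \<noteq> {} \<and> t \<subseteq> R `` {w} \<and> supp R V t f)"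
| "anti R V s (PDia f) = (\<forall>w\<in>s. anti R V (R `` {w}) f)"
| "supp R V s (PWd f) = (supp R V s f \<or> s = {})"
| "anti R V s (PWd f) = anti R V s f"

text \<open>Semantic consequence, over all Kripke models whose worlds are drawn from
the type 'w (the theorem quantifies over every such type).\<close>
definition entails :: "'w itself \<Rightarrow> form set \<Rightarrow> form \<Rightarrow> bool" where
  "entails _ \<Phi> \<psi> \<longleftrightarrow>
     (\<forall>(W :: 'w set) R V s. kmodel W R V \<longrightarrow> s \<subseteq> W \<longrightarrow>
        (\<forall>\<phi>\<in>\<Phi>. supp R V s \<phi>) \<longrightarrow> supp R V s \<psi>)"

text \<open>Contexts built only from conjunction, disjunction and the slashed-circle
operator: the hole of such a context is exactly a distributive position
(not in the scope of negation or diamond).\<close>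

datatype dctx =
    Hole
  | CConjL dctx form
  | CConjR form dctx
  | CDisjL dctx form
  | CDisjR form dctx
  | CWd dctx

fun fill :: "dctx \<Rightarrow> form \<Rightarrow> form" where
  "fill Hole x = x"
| "fill (CConjL c b) x = PConj (fill c x) b"
| "fill (CConjR a c) x = PConj a (fill c x)"
| "fill (CDisjL c b) x = PDisj (fill c x) b"
| "fill (CDisjR a c) x = PDisj a (fill c x)"
| "fill (CWd c) x = PWd (fill c x)"

text \<open>ND G f: there is a natural deduction derivation of f whose set of
undischarged assumptions is G.\<close>

inductive ND :: "form set \<Rightarrow> form \<Rightarrow> bool" where
  assm: "ND {f} f"
| conjI: "ND A f \<Longrightarrow> ND B g \<Longrightarrow> ND (A \<union> B) (PConj f g)"
| conjE1: "ND A (PConj f g) \<Longrightarrow> ND A f"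
| conjE2: "ND A (PConj f g) \<Longrightarrow> ND A g"
| negI: "classical a \<Longrightarrow> ND A PBot \<Longrightarrow> (\<forall>x\<in>A - {a}. noNE x) \<Longrightarrow> ND (A - {a}) (PNeg a)"
| negE: "classical a \<Longrightarrow> classical b \<Longrightarrow> ND A a \<Longrightarrow> ND B (PNeg a) \<Longrightarrow> ND (A \<union> B) b"
| dnegE: "ND A (PNeg (PNeg f)) \<Longrightarrow> ND A f"
| dnegI: "ND A f \<Longrightarrow> ND A (PNeg (PNeg f))"
| dmConj1: "ND A (PNeg (PConj f g)) \<Longrightarrow> ND A (PDisj (PNeg f) (PNeg g))"
| dmConj2: "ND A (PDisj (PNeg f) (PNeg g)) \<Longrightarrow> ND A (PNeg (PConj f g))"
| dmDisj1: "ND A (PNeg (PDisj f g)) \<Longrightarrow> ND A (PConj (PNeg f) (PNeg g))"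
| dmDisj2: "ND A (PConj (PNeg f) (PNeg g)) \<Longrightarrow> ND A (PNeg (PDisj f g))"
| negNE1: "ND A (PNeg PNE) \<Longrightarrow> ND A PBot"
| negNE2: "ND A PBot \<Longrightarrow> ND A (PNeg PNE)"
| disjI: "noNE g \<Longrightarrow> ND A f \<Longrightarrow> ND A (PDisj f g)"
| disjDup: "ND A f \<Longrightarrow> ND A (PDisj f f)"
| disjComm: "ND A (PDisj f g) \<Longrightarrow> ND A (PDisj g f)"
| disjE: "ND A (PDisj f g) \<Longrightarrow> ND B h \<Longrightarrow> ND C h \<Longrightarrow>
          (\<forall>x\<in>B - {f}. noNE x) \<Longrightarrow> (\<forall>x\<in>C - {g}. noNE x) \<Longrightarrow>
          ND (A \<union> (B - {f}) \<union> (C - {g})) h"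
| disjSub: "ND A (PDisj f g) \<Longrightarrow> ND B h \<Longrightarrow> (\<forall>x\<in>B - {g}. noNE x) \<Longrightarrow>
          ND (A \<union> (B - {g})) (PDisj f h)"
| botDisj: "ND A (PDisj PBot f) \<Longrightarrow> ND A f"
| bbotDisj: "ND A (PDisj PBBot f) \<Longrightarrow> ND A g"
| diaMono: "B \<subseteq> {f} \<Longrightarrow> ND B g \<Longrightarrow> ND A (PDia f) \<Longrightarrow> ND A (PDia g)"
| boxMono: "ND B g \<Longrightarrow> (\<forall>x\<in>B. ND (D x) (PBox x)) \<Longrightarrow> ND (\<Union>x\<in>B. D x) (PBox g)"
| negDia1: "ND A (PNeg (PDia f)) \<Longrightarrow> ND A (PBox (PNeg f))"
| negDia2: "ND A (PBox (PNeg f)) \<Longrightarrow> ND A (PNeg (PDia f))"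
| diaNE: "ND A (PDia (PDisj f (PConj g PNE))) \<Longrightarrow> ND A (PDia g)"
| diaJoin: "ND A (PDia f) \<Longrightarrow> ND B (PDia g) \<Longrightarrow> ND (A \<union> B) (PDia (PDisj f g))"
| boxNE: "ND A (PBox (PConj f PNE)) \<Longrightarrow> ND A (PDia f)"
| boxDia: "ND A (PBox f) \<Longrightarrow> ND B (PDia g) \<Longrightarrow> ND (A \<union> B) (PBox (PDisj f g))"
| wdAx: "ND {} (PWd PNE)"
| wdBot: "ND A PBot \<Longrightarrow> ND A (PWd f)"
| wdI: "ND A f \<Longrightarrow> ND A (PWd f)"
| wdE: "ND A (fill c (PWd g)) \<Longrightarrow> ND B h \<Longrightarrow> ND C h \<Longrightarrow>
          ND (A \<union> (B - {fill c g}) \<union> (C - {fill c PBot})) h"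
| negWd1: "ND A (PNeg (PWd f)) \<Longrightarrow> ND A (PNeg f)"
| negWd2: "ND A (PNeg f) \<Longrightarrow> ND A (PNeg (PWd f))"
| wdDia: "ND A (PDia (fill c (PWd g))) \<Longrightarrow>
          ND A (PDisj (PDia (fill c g)) (PDia (fill c PBot)))"
| wdBox: "ND A (PBox (fill c (PWd g))) \<Longrightarrow>
          ND A (PDisj (PBox (fill c g)) (PBox (fill c PBot)))"

definition derivable :: "form set \<Rightarrow> form \<Rightarrow> bool" where
  "derivable \<Phi> \<psi> \<longleftrightarrow> (\<exists>G. G \<subseteq> \<Phi> \<and> ND G \<psi>)"

end

theory Submission
  imports Defs
begin

lemma empty_prop: "noNE f \<Longrightarrow> supp R V {} f \<and> anti R V {} f"
  by (induction f) auto

lemma classical_noNE: "classical f \<Longrightarrow> noNE f"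
  by (induction f) auto

lemma down_prop: "noNE f \<Longrightarrow> (\<forall>s t. supp R V s f \<longrightarrow> t \<subseteq> s \<longrightarrow> supp R V t f) \<and>
   (\<forall>s t. anti R V s f \<longrightarrow> t \<subseteq> s \<longrightarrow> anti R V t f)"
proof (induction f)
  case (PConj f1 f2)
  have a: "anti R V t' (PConj f1 f2)" if h: "anti R V s (PConj f1 f2)" "t' \<subseteq> s" for s t'
  proof -
    obtain t u where tu: "s = t \<union> u" "anti R V t f1" "anti R V u f2" using h(1) by auto
    have "anti R V (t' \<inter> t) f1" "anti R V (t' \<inter> u) f2" using PConj tu by (meson inf_le2 noNE.simps(3))+
    moreover have "t' = (t' \<inter> t) \<union> (t' \<inter> u)" using tu h(2) by blast
    ultimately show ?thesis by (metis anti.simps(4))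
  qed
  show ?case using a PConj by auto
next
  case (PDisj f1 f2)
  have a: "supp R V t' (PDisj f1 f2)" if h: "supp R V s (PDisj f1 f2)" "t' \<subseteq> s" for s t'
  proof -
    obtain t u where tu: "s = t \<union> u" "supp R V t f1" "supp R V u f2" using h(1) by auto
    have "supp R V (t' \<inter> t) f1" "supp R V (t' \<inter> u) f2" using PDisj tu by (meson inf_le2 noNE.simps(4))+
    moreover have "t' = (t' \<inter> t) \<union> (t' \<inter> u)" using tu h(2) by blast
    ultimately show ?thesis by (metis supp.simps(5))
  qed
  show ?case using a PDisj by auto
qed auto

lemma union_prop: "(\<forall>s t. supp R V s f \<longrightarrow> supp R V t f \<longrightarrow> supp R V (s \<union> t) f) \<and>
   (\<forall>s t. anti R V s f \<longrightarrow> anti R V t f \<longrightarrow> anti R V (s \<union> t) f)"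
proof (induction f)
  case (PConj f1 f2)
  have a: "anti R V (s \<union> s') (PConj f1 f2)" if h: "anti R V s (PConj f1 f2)" "anti R V s' (PConj f1 f2)" for s s'
  proof -
    obtain t u where tu: "s = t \<union> u" "anti R V t f1" "anti R V u f2" using h(1) by auto
    obtain t' u' where tu': "s' = t' \<union> u'" "anti R V t' f1" "anti R V u' f2" using h(2) by auto
    have "anti R V (t \<union> t') f1" "anti R V (u \<union> u') f2" using PConj tu tu' by blast+
    moreover have "s \<union> s' = (t \<union> t') \<union> (u \<union> u')" using tu tu' by blast
    ultimately show ?thesis by (metis anti.simps(4))
  qed
  show ?case using a PConj by auto
next
  case (PDisj f1 f2)
  have a: "supp R V (s \<union> s') (PDisj f1 f2)" if h: "supp R V s (PDisj f1 f2)" "supp R V s' (PDisj f1 f2)" for s s'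
  proof -
    obtain t u where tu: "s = t \<union> u" "supp R V t f1" "supp R V u f2" using h(1) by auto
    obtain t' u' where tu': "s' = t' \<union> u'" "supp R V t' f1" "supp R V u' f2" using h(2) by auto
    have "supp R V (t \<union> t') f1" "supp R V (u \<union> u') f2" using PDisj tu tu' by blast+
    moreover have "s \<union> s' = (t \<union> t') \<union> (u \<union> u')" using tu tu' by blast
    ultimately show ?thesis by (metis supp.simps(5))
  qed
  show ?case using a PDisj by auto
qed auto

lemma down1: "noNE f \<Longrightarrow> supp R V s f \<Longrightarrow> t \<subseteq> s \<Longrightarrow> supp R V t f"
  using down_prop by blast

lemma down2: "noNE f \<Longrightarrow> anti R V s f \<Longrightarrow> t \<subseteq> s \<Longrightarrow> anti R V t f"
  using down_prop by blast

lemma single_split: "{w} = t \<union> u \<Longrightarrow> t = {w} \<or> u = {w}"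
  by (metis Un_empty insert_not_empty subset_singletonD sup.cobounded1 sup_ge2)

lemma inst: "\<forall>s. P s \<longrightarrow> Q s \<Longrightarrow> P s \<Longrightarrow> Q s"
  by blast

lemma flat_prop: "classical f \<Longrightarrow> (\<forall>s. (\<forall>w\<in>s. supp R V {w} f) \<longrightarrow> supp R V s f) \<and>
   (\<forall>s. (\<forall>w\<in>s. anti R V {w} f) \<longrightarrow> anti R V s f)"
proof (induction f)
  case (PAtom p)
  show ?case by auto
next
  case (PNeg f)
  have "classical f" using PNeg.prems by simp
  note ih = PNeg.IH[OF this]
  have A1: "supp R V s (PNeg f)" if a: "\<forall>w\<in>s. supp R V {w} (PNeg f)" for s
  proof -
    have "\<forall>w\<in>s. anti R V {w} f" using a by simp
    then have "anti R V s f" using ih by blast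
    then show ?thesis by simp
  qed
  have A2: "anti R V s (PNeg f)" if a: "\<forall>w\<in>s. anti R V {w} (PNeg f)" for s
  proof -
    have "\<forall>w\<in>s. supp R V {w} f" using a by simp
    then have "supp R V s f" using ih by blast
    then show ?thesis by simp
  qed
  show ?case using A1 A2 by blast
next
  case (PConj f1 f2)
  have c: "classical f1" "classical f2" using PConj.prems by simp_all
  note ih1 = PConj.IH(1)[OF c(1)] and ih2 = PConj.IH(2)[OF c(2)]
  have A1: "supp R V s (PConj f1 f2)" if a: "\<forall>w\<in>s. supp R V {w} (PConj f1 f2)" for s
  proof -
    have "\<forall>w\<in>s. supp R V {w} f1" using a by simp
    then have 1: "supp R V s f1" using ih1 by blast
    have "\<forall>w\<in>s. supp R V {w} f2" using a by simp
    then have 2: "supp R V s f2" using ih2 by blast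
    show ?thesis using 1 2 by simp
  qed
  have A2: "anti R V s (PConj f1 f2)" if a: "\<forall>w\<in>s. anti R V {w} (PConj f1 f2)" for s
  proof -
    have o: "anti R V {w} f1 \<or> anti R V {w} f2" if w: "w \<in> s" for w
    proof -
      obtain t u where tu: "{w} = t \<union> u" "anti R V t f1" "anti R V u f2" using a w by auto
      from single_split[OF tu(1)] show ?thesis
      proof
        assume "t = {w}" then show ?thesis using tu(2) by simp
      next
        assume "u = {w}" then show ?thesis using tu(3) by simp
      qed
    qed
    define T where "T = {w\<in>s. anti R V {w} f1}"
    define U where "U = {w\<in>s. anti R V {w} f2}"
    have "s = T \<union> U" unfolding T_def U_def using o by blast
    moreover have "\<forall>w\<in>T. anti R V {w} f1" unfolding T_def by simp
    then have "anti R V T f1" using ih1 by blast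
    moreover have "\<forall>w\<in>U. anti R V {w} f2" unfolding U_def by simp
    then have "anti R V U f2" using ih2 by blast
    ultimately show ?thesis by auto
  qed
  show ?case using A1 A2 by blast
next
  case (PDisj f1 f2)
  have c: "classical f1" "classical f2" using PDisj.prems by simp_all
  note ih1 = PDisj.IH(1)[OF c(1)] and ih2 = PDisj.IH(2)[OF c(2)]
  have A1: "anti R V s (PDisj f1 f2)" if a: "\<forall>w\<in>s. anti R V {w} (PDisj f1 f2)" for s
  proof -
    have "\<forall>w\<in>s. anti R V {w} f1" using a by simp
    then have 1: "anti R V s f1" using ih1 by blast
    have "\<forall>w\<in>s. anti R V {w} f2" using a by simp
    then have 2: "anti R V s f2" using ih2 by blast
    show ?thesis using 1 2 by simp
  qed
  have A2: "supp R V s (PDisj f1 f2)" if a: "\<forall>w\<in>s. supp R V {w} (PDisj f1 f2)" for s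
  proof -
    have o: "supp R V {w} f1 \<or> supp R V {w} f2" if w: "w \<in> s" for w
    proof -
      obtain t u where tu: "{w} = t \<union> u" "supp R V t f1" "supp R V u f2" using a w by auto
      from single_split[OF tu(1)] show ?thesis
      proof
        assume "t = {w}" then show ?thesis using tu(2) by simp
      next
        assume "u = {w}" then show ?thesis using tu(3) by simp
      qed
    qed
    define T where "T = {w\<in>s. supp R V {w} f1}"
    define U where "U = {w\<in>s. supp R V {w} f2}"
    have "s = T \<union> U" unfolding T_def U_def using o by blast
    moreover have "\<forall>w\<in>T. supp R V {w} f1" unfolding T_def by simp
    then have "supp R V T f1" using ih1 by blast
    moreover have "\<forall>w\<in>U. supp R V {w} f2" unfolding U_def by simp
    then have "supp R V U f2" using ih2 by blast
    ultimately show ?thesis by auto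
  qed
  show ?case using A1 A2 by blast
next
  case (PDia f)
  show ?case by auto
next
  case PNE
  show ?case using PNE.prems by simp
next
  case (PWd f)
  show ?case using PWd.prems by simp
qed

lemma flat_supp: assumes "classical f" "\<forall>w\<in>s. supp R V {w} f" shows "supp R V s f"
  by (rule inst[OF conjunct1[OF flat_prop[OF assms(1)]] assms(2)])

lemma flat_anti: assumes "classical f" "\<forall>w\<in>s. anti R V {w} f" shows "anti R V s f"
  by (rule inst[OF conjunct2[OF flat_prop[OF assms(1)]] assms(2)])

lemma biv_prop: "classical f \<Longrightarrow> supp R V {w} f \<longleftrightarrow> \<not> anti R V {w} f"
proof (induction f arbitrary: w)
  case (PAtom p)
  show ?case by auto
next
  case (PNeg f)
  have "classical f" using PNeg.prems by simp
  note ih = PNeg.IH[OF this, of w]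
  have "supp R V {w} (PNeg f) = anti R V {w} f" by simp
  moreover have "anti R V {w} (PNeg f) = supp R V {w} f" by simp
  ultimately show ?case using ih by simp
next
  case (PConj f1 f2)
  have c: "classical f1" "classical f2" using PConj.prems by simp_all
  note ih1 = PConj.IH(1)[OF c(1), of w] and ih2 = PConj.IH(2)[OF c(2), of w]
  have e: "anti R V {} f1" "anti R V {} f2"
    using empty_prop[OF classical_noNE[OF c(1)]] empty_prop[OF classical_noNE[OF c(2)]] by auto
  have eq: "anti R V {w} (PConj f1 f2) \<longleftrightarrow> anti R V {w} f1 \<or> anti R V {w} f2"
  proof
    assume "anti R V {w} (PConj f1 f2)"
    then obtain t u where tu: "{w} = t \<union> u" "anti R V t f1" "anti R V u f2" by auto
    from single_split[OF tu(1)] show "anti R V {w} f1 \<or> anti R V {w} f2"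
    proof
      assume "t = {w}" then show ?thesis using tu(2) by simp
    next
      assume "u = {w}" then show ?thesis using tu(3) by simp
    qed
  next
    assume "anti R V {w} f1 \<or> anti R V {w} f2"
    then show "anti R V {w} (PConj f1 f2)"
    proof
      assume "anti R V {w} f1"
      then have "{w} = {w} \<union> {} \<and> anti R V {w} f1 \<and> anti R V {} f2" using e by simp
      then show ?thesis by (simp only: anti.simps) blast
    next
      assume "anti R V {w} f2"
      then have "{w} = {} \<union> {w} \<and> anti R V {} f1 \<and> anti R V {w} f2" using e by simp
      then show ?thesis by (simp only: anti.simps) blast
    qed
  qed
  have "supp R V {w} (PConj f1 f2) = (supp R V {w} f1 \<and> supp R V {w} f2)" by simp
  then show ?case using eq ih1 ih2 by simp
next
  case (PDisj f1 f2)
  have c: "classical f1" "classical f2" using PDisj.prems by simp_all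
  note ih1 = PDisj.IH(1)[OF c(1), of w] and ih2 = PDisj.IH(2)[OF c(2), of w]
  have e: "supp R V {} f1" "supp R V {} f2"
    using empty_prop[OF classical_noNE[OF c(1)]] empty_prop[OF classical_noNE[OF c(2)]] by auto
  have eq: "supp R V {w} (PDisj f1 f2) \<longleftrightarrow> supp R V {w} f1 \<or> supp R V {w} f2"
  proof
    assume "supp R V {w} (PDisj f1 f2)"
    then obtain t u where tu: "{w} = t \<union> u" "supp R V t f1" "supp R V u f2" by auto
    from single_split[OF tu(1)] show "supp R V {w} f1 \<or> supp R V {w} f2"
    proof
      assume "t = {w}" then show ?thesis using tu(2) by simp
    next
      assume "u = {w}" then show ?thesis using tu(3) by simp
    qed
  next
    assume "supp R V {w} f1 \<or> supp R V {w} f2"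
    then show "supp R V {w} (PDisj f1 f2)"
    proof
      assume "supp R V {w} f1"
      then have "{w} = {w} \<union> {} \<and> supp R V {w} f1 \<and> supp R V {} f2" using e by simp
      then show ?thesis by (simp only: supp.simps) blast
    next
      assume "supp R V {w} f2"
      then have "{w} = {} \<union> {w} \<and> supp R V {} f1 \<and> supp R V {w} f2" using e by simp
      then show ?thesis by (simp only: supp.simps) blast
    qed
  qed
  have "anti R V {w} (PDisj f1 f2) = (anti R V {w} f1 \<and> anti R V {w} f2)" by simp
  then show ?case using eq ih1 ih2 by simp
next
  case (PDia f)
  have c: "classical f" using PDia.prems by simp
  note ih = PDia.IH[OF c]
  have s1: "supp R V {w} (PDia f) \<longleftrightarrow> (\<exists>v\<in>R `` {w}. supp R V {v} f)"
  proof
    assume "supp R V {w} (PDia f)"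
    then obtain t where t: "t \<noteq> {}" "t \<subseteq> R `` {w}" "supp R V t f" by auto
    then obtain v where v: "v \<in> t" by blast
    have "supp R V {v} f" using down1[OF classical_noNE[OF c] t(3)] v by simp
    then show "\<exists>v\<in>R `` {w}. supp R V {v} f" using v t(2) by blast
  next
    assume "\<exists>v\<in>R `` {w}. supp R V {v} f"
    then obtain v where v: "v \<in> R `` {w}" "supp R V {v} f" by blast
    then have "{v} \<noteq> {} \<and> {v} \<subseteq> R `` {w} \<and> supp R V {v} f" by simp
    then have "\<exists>t. t \<noteq> {} \<and> t \<subseteq> R `` {w} \<and> supp R V t f" by blast
    then show "supp R V {w} (PDia f)" by simp
  qed
  have s2: "anti R V {w} (PDia f) \<longleftrightarrow> (\<forall>v\<in>R `` {w}. anti R V {v} f)"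
  proof
    assume "anti R V {w} (PDia f)"
    then have a: "anti R V (R `` {w}) f" by simp
    show "\<forall>v\<in>R `` {w}. anti R V {v} f"
    proof
      fix v assume "v \<in> R `` {w}"
      then show "anti R V {v} f" using down2[OF classical_noNE[OF c] a] by simp
    qed
  next
    assume "\<forall>v\<in>R `` {w}. anti R V {v} f"
    then have "anti R V (R `` {w}) f" by (rule flat_anti[OF c])
    then show "anti R V {w} (PDia f)" by simp
  qed
  have "(\<exists>v\<in>R `` {w}. supp R V {v} f) \<longleftrightarrow> \<not> (\<forall>v\<in>R `` {w}. anti R V {v} f)"
    using ih by blast
  then show ?case using s1 s2 by simp
next
  case PNE
  then show ?case by simp
next
  case (PWd f)
  then show ?case by simp
qed

lemma fill_wd: "supp R V s (fill c (PWd g)) \<Longrightarrow> supp R V s (fill c g) \<or> supp R V s (fill c PBot)"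
proof (induction c arbitrary: s)
  case Hole
  then show ?case by (auto simp: PBot_def)
next
  case (CDisjL c b)
  then show ?case by fastforce
next
  case (CDisjR a c)
  then show ?case by fastforce
next
  case (CWd c)
  then show ?case by auto
qed auto

lemma supp_box: "supp R V s (PBox x) \<longleftrightarrow> (\<forall>w\<in>s. supp R V (R `` {w}) x)"
  by (simp add: PBox_def)

lemma supp_bot: "supp R V s PBot \<longleftrightarrow> s = {}"
  by (auto simp: PBot_def)

lemma supp_disj: "supp R V s (PDisj f g) = (\<exists>t u. s = t \<union> u \<and> supp R V t f \<and> supp R V u g)"
  by simp

lemma supp_dia: "supp R V s (PDia f) = (\<forall>w\<in>s. \<exists>t. t \<noteq> {} \<and> t \<subseteq> R `` {w} \<and> supp R V t f)"
  by simp

lemma ball_down: "\<forall>x\<in>G. noNE x \<Longrightarrow> \<forall>x\<in>G. supp R V s x \<Longrightarrow> t \<subseteq> s \<Longrightarrow> \<forall>x\<in>G. supp R V t x"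
  using down1 by blast

lemma ball_ins: "\<forall>x\<in>B - {a}. P x \<Longrightarrow> P a \<Longrightarrow> \<forall>x\<in>B. P x"
  by blast

lemma ball_UnD1: "\<forall>x\<in>A \<union> B. P x \<Longrightarrow> \<forall>x\<in>A. P x"
  by simp

lemma ball_UnD2: "\<forall>x\<in>A \<union> B. P x \<Longrightarrow> \<forall>x\<in>B. P x"
  by simp

lemma union1: "supp R V s f \<Longrightarrow> supp R V t f \<Longrightarrow> supp R V (s \<union> t) f"
  using union_prop by blast

lemma sound: "ND G f \<Longrightarrow> \<forall>s. (\<forall>g\<in>G. supp R V s g) \<longrightarrow> supp R V s f"
proof (induction rule: ND.induct)
  case (negI a A)
  have ih: "\<forall>s. (\<forall>g\<in>A. supp R V s g) \<longrightarrow> supp R V s PBot" by (rule negI.IH)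
  have nn: "\<forall>x\<in>A - {a}. noNE x" by (rule negI.hyps(3))
  have ca: "classical a" by (rule negI.hyps(1))
  show ?case
  proof (intro allI impI)
    fix s assume s: "\<forall>g\<in>A - {a}. supp R V s g"
    have "\<forall>w\<in>s. anti R V {w} a"
    proof
      fix w assume w: "w \<in> s"
      show "anti R V {w} a"
      proof (rule ccontr)
        assume "\<not> anti R V {w} a"
        then have sa: "supp R V {w} a" using biv_prop[OF ca, of R V w] by simp
        have ws: "{w} \<subseteq> s" using w by simp
        have "\<forall>g\<in>A - {a}. supp R V {w} g" by (rule ball_down[OF nn s ws])
        then have "\<forall>g\<in>A. supp R V {w} g" using sa by (rule ball_ins)
        then have "supp R V {w} PBot" by (rule inst[OF ih])
        then show False by (simp add: supp_bot)
      qed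
    qed
    then have "anti R V s a" by (rule flat_anti[OF ca])
    then show "supp R V s (PNeg a)" by simp
  qed
next
  case (negE a b A B)
  have ihA: "\<forall>s. (\<forall>g\<in>A. supp R V s g) \<longrightarrow> supp R V s a" by (rule negE.IH(1))
  have ihB: "\<forall>s. (\<forall>g\<in>B. supp R V s g) \<longrightarrow> supp R V s (PNeg a)" by (rule negE.IH(2))
  have ca: "classical a" by (rule negE.hyps(1))
  have cb: "classical b" by (rule negE.hyps(2))
  show ?case
  proof (intro allI impI)
    fix s assume s: "\<forall>g\<in>A \<union> B. supp R V s g"
    have sA: "\<forall>g\<in>A. supp R V s g" using s by simp
    have sB: "\<forall>g\<in>B. supp R V s g" using s by simp
    have sa: "supp R V s a" by (rule inst[OF ihA sA])
    have "supp R V s (PNeg a)" by (rule inst[OF ihB sB])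
    then have aa: "anti R V s a" by simp
    have "s = {}"
    proof (rule ccontr)
      assume "s \<noteq> {}"
      then obtain w where w: "w \<in> s" by blast
      have ws: "{w} \<subseteq> s" using w by simp
      have "supp R V {w} a" by (rule down1[OF classical_noNE[OF ca] sa ws])
      moreover have "anti R V {w} a" by (rule down2[OF classical_noNE[OF ca] aa ws])
      ultimately show False using biv_prop[OF ca, of R V w] by simp
    qed
    then show "supp R V s b" using empty_prop[OF classical_noNE[OF cb], of R V] by simp
  qed
next
  case (disjE A f g B h C)
  have ihA: "\<forall>s. (\<forall>x\<in>A. supp R V s x) \<longrightarrow> supp R V s (PDisj f g)" by (rule disjE.IH(1))
  have ihB: "\<forall>s. (\<forall>x\<in>B. supp R V s x) \<longrightarrow> supp R V s h" by (rule disjE.IH(2))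
  have ihC: "\<forall>s. (\<forall>x\<in>C. supp R V s x) \<longrightarrow> supp R V s h" by (rule disjE.IH(3))
  have nB: "\<forall>x\<in>B - {f}. noNE x" by (rule disjE.hyps(4))
  have nC: "\<forall>x\<in>C - {g}. noNE x" by (rule disjE.hyps(5))
  show ?case
  proof (intro allI impI)
    fix s assume s: "\<forall>x\<in>A \<union> (B - {f}) \<union> (C - {g}). supp R V s x"
    have sA: "\<forall>x\<in>A. supp R V s x" using s by simp
    have sB: "\<forall>x\<in>B - {f}. supp R V s x" using s by simp
    have sC: "\<forall>x\<in>C - {g}. supp R V s x" using s by simp
    have "supp R V s (PDisj f g)" by (rule inst[OF ihA sA])
    then obtain t u where tu: "s = t \<union> u" "supp R V t f" "supp R V u g" unfolding supp_disj by blast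
    have ts: "t \<subseteq> s" and us: "u \<subseteq> s" using tu(1) by simp_all
    have "\<forall>x\<in>B - {f}. supp R V t x" by (rule ball_down[OF nB sB ts])
    then have "\<forall>x\<in>B. supp R V t x" using tu(2) by (rule ball_ins)
    then have 1: "supp R V t h" by (rule inst[OF ihB])
    have "\<forall>x\<in>C - {g}. supp R V u x" by (rule ball_down[OF nC sC us])
    then have "\<forall>x\<in>C. supp R V u x" using tu(3) by (rule ball_ins)
    then have 2: "supp R V u h" by (rule inst[OF ihC])
    have "supp R V (t \<union> u) h" by (rule union1[OF 1 2])
    then show "supp R V s h" using tu(1) by simp
  qed
next
  case (disjSub A f g B h)
  have ihA: "\<forall>s. (\<forall>x\<in>A. supp R V s x) \<longrightarrow> supp R V s (PDisj f g)" by (rule disjSub.IH(1))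
  have ihB: "\<forall>s. (\<forall>x\<in>B. supp R V s x) \<longrightarrow> supp R V s h" by (rule disjSub.IH(2))
  have nB: "\<forall>x\<in>B - {g}. noNE x" by (rule disjSub.hyps(3))
  show ?case
  proof (intro allI impI)
    fix s assume s: "\<forall>x\<in>A \<union> (B - {g}). supp R V s x"
    have sA: "\<forall>x\<in>A. supp R V s x" using s by simp
    have sB: "\<forall>x\<in>B - {g}. supp R V s x" using s by simp
    have "supp R V s (PDisj f g)" by (rule inst[OF ihA sA])
    then obtain t u where tu: "s = t \<union> u" "supp R V t f" "supp R V u g" unfolding supp_disj by blast
    have us: "u \<subseteq> s" using tu(1) by simp
    have "\<forall>x\<in>B - {g}. supp R V u x" by (rule ball_down[OF nB sB us])
    then have "\<forall>x\<in>B. supp R V u x" using tu(3) by (rule ball_ins)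
    then have "supp R V u h" by (rule inst[OF ihB])
    then show "supp R V s (PDisj f h)" using tu(1,2) unfolding supp_disj by blast
  qed
next
  case (boxMono B g D)
  have ihB: "\<forall>s. (\<forall>x\<in>B. supp R V s x) \<longrightarrow> supp R V s g" by (rule boxMono.IH(1))
  have ihD: "\<forall>x\<in>B. ND (D x) (PBox x) \<and> (\<forall>s. (\<forall>y\<in>D x. supp R V s y) \<longrightarrow> supp R V s (PBox x))"
    by (rule boxMono.IH(2))
  show ?case
  proof (intro allI impI)
    fix s assume s: "\<forall>x\<in>(\<Union>x\<in>B. D x). supp R V s x"
    have bx: "\<forall>w\<in>s. supp R V (R `` {w}) x" if x: "x \<in> B" for x
    proof -
      have "\<forall>y\<in>D x. supp R V s y" using s x by simp
      moreover have "\<forall>s. (\<forall>y\<in>D x. supp R V s y) \<longrightarrow> supp R V s (PBox x)" using ihD x by simp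
      ultimately have "supp R V s (PBox x)" using inst by metis
      then show ?thesis by (simp only: supp_box)
    qed
    have "\<forall>w\<in>s. supp R V (R `` {w}) g"
    proof
      fix w assume w: "w \<in> s"
      have "\<forall>x\<in>B. supp R V (R `` {w}) x" using bx w by simp
      then show "supp R V (R `` {w}) g" by (rule inst[OF ihB])
    qed
    then show "supp R V s (PBox g)" by (simp only: supp_box)
  qed
next
  case (wdE A c g B h C)
  have ihA: "\<forall>s. (\<forall>x\<in>A. supp R V s x) \<longrightarrow> supp R V s (fill c (PWd g))" by (rule wdE.IH(1))
  have ihB: "\<forall>s. (\<forall>x\<in>B. supp R V s x) \<longrightarrow> supp R V s h" by (rule wdE.IH(2))
  have ihC: "\<forall>s. (\<forall>x\<in>C. supp R V s x) \<longrightarrow> supp R V s h" by (rule wdE.IH(3))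
  show ?case
  proof (intro allI impI)
    fix s assume s: "\<forall>x\<in>A \<union> (B - {fill c g}) \<union> (C - {fill c PBot}). supp R V s x"
    have sA: "\<forall>x\<in>A. supp R V s x" by (rule ball_UnD1[OF ball_UnD1[OF s]])
    have sB: "\<forall>x\<in>B - {fill c g}. supp R V s x" by (rule ball_UnD2[OF ball_UnD1[OF s]])
    have sC: "\<forall>x\<in>C - {fill c PBot}. supp R V s x" by (rule ball_UnD2[OF s])
    have "supp R V s (fill c (PWd g))" by (rule inst[OF ihA sA])
    then have "supp R V s (fill c g) \<or> supp R V s (fill c PBot)" by (rule fill_wd)
    then show "supp R V s h"
    proof
      assume "supp R V s (fill c g)"
      with sB have "\<forall>x\<in>B. supp R V s x" by (rule ball_ins)
      then show ?thesis by (rule inst[OF ihB])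
    next
      assume "supp R V s (fill c PBot)"
      with sC have "\<forall>x\<in>C. supp R V s x" by (rule ball_ins)
      then show ?thesis by (rule inst[OF ihC])
    qed
  qed
next
  case (wdDia A c g)
  show ?case
  proof (intro allI impI)
    fix s assume s: "\<forall>x\<in>A. supp R V s x"
    have "supp R V s (PDia (fill c (PWd g)))" by (rule inst[OF wdDia.IH s])
    then have a: "\<forall>w\<in>s. \<exists>t. t \<noteq> {} \<and> t \<subseteq> R `` {w} \<and> supp R V t (fill c (PWd g))"
      by (simp only: supp_dia)
    define t where "t = {w\<in>s. \<exists>t'. t' \<noteq> {} \<and> t' \<subseteq> R `` {w} \<and> supp R V t' (fill c g)}"
    have "\<forall>w\<in>s - t. \<exists>t'. t' \<noteq> {} \<and> t' \<subseteq> R `` {w} \<and> supp R V t' (fill c PBot)"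
    proof
      fix w assume w: "w \<in> s - t"
      then obtain t' where t': "t' \<noteq> {}" "t' \<subseteq> R `` {w}" "supp R V t' (fill c (PWd g))"
        using a by blast
      have "\<not> supp R V t' (fill c g)" using w t' unfolding t_def by blast
      then have "supp R V t' (fill c PBot)" using fill_wd[OF t'(3)] by blast
      then show "\<exists>t'. t' \<noteq> {} \<and> t' \<subseteq> R `` {w} \<and> supp R V t' (fill c PBot)" using t' by blast
    qed
    then have s2: "supp R V (s - t) (PDia (fill c PBot))" by (simp only: supp_dia)
    have "\<forall>w\<in>t. \<exists>t'. t' \<noteq> {} \<and> t' \<subseteq> R `` {w} \<and> supp R V t' (fill c g)"
      unfolding t_def by blast
    then have s1: "supp R V t (PDia (fill c g))" by (simp only: supp_dia)
    have "s = t \<union> (s - t)" unfolding t_def by blast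
    then show "supp R V s (PDisj (PDia (fill c g)) (PDia (fill c PBot)))"
      using s1 s2 unfolding supp_disj by blast
  qed
next
  case (wdBox A c g)
  show ?case
  proof (intro allI impI)
    fix s assume s: "\<forall>x\<in>A. supp R V s x"
    have "supp R V s (PBox (fill c (PWd g)))" by (rule inst[OF wdBox.IH s])
    then have a: "\<forall>w\<in>s. supp R V (R `` {w}) (fill c (PWd g))"
      by (simp only: supp_box)
    define t where "t = {w\<in>s. supp R V (R `` {w}) (fill c g)}"
    have "\<forall>w\<in>s - t. supp R V (R `` {w}) (fill c PBot)"
    proof
      fix w assume w: "w \<in> s - t"
      then have "supp R V (R `` {w}) (fill c (PWd g))" using a by blast
      then have "supp R V (R `` {w}) (fill c g) \<or> supp R V (R `` {w}) (fill c PBot)" by (rule fill_wd)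
      then show "supp R V (R `` {w}) (fill c PBot)" using w unfolding t_def by blast
    qed
    then have s2: "supp R V (s - t) (PBox (fill c PBot))" by (simp only: supp_box)
    have "\<forall>w\<in>t. supp R V (R `` {w}) (fill c g)" unfolding t_def by blast
    then have s1: "supp R V t (PBox (fill c g))" by (simp only: supp_box)
    have "s = t \<union> (s - t)" unfolding t_def by blast
    then show "supp R V s (PDisj (PBox (fill c g)) (PBox (fill c PBot)))"
      using s1 s2 unfolding supp_disj by blast
  qed
next
  case (disjI g A f)
  show ?case
  proof (intro allI impI)
    fix s assume s: "\<forall>x\<in>A. supp R V s x"
    have "supp R V s f" by (rule inst[OF disjI.IH s])
    moreover have "supp R V {} g" using empty_prop[OF disjI(1)] by blast
    ultimately show "supp R V s (PDisj f g)" by (metis supp_disj sup_bot.right_neutral)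
  qed
next
  case (disjComm A f g)
  show ?case
  proof (intro allI impI)
    fix s assume s: "\<forall>x\<in>A. supp R V s x"
    have "supp R V s (PDisj f g)" by (rule inst[OF disjComm.IH s])
    then obtain t u where "s = t \<union> u" "supp R V t f" "supp R V u g" unfolding supp_disj by blast
    then show "supp R V s (PDisj g f)" by (metis supp_disj sup_commute)
  qed
next
  case (diaMono B f g A)
  have ihB: "\<forall>s. (\<forall>x\<in>B. supp R V s x) \<longrightarrow> supp R V s g" by (rule diaMono.IH(1))
  have ihA: "\<forall>s. (\<forall>x\<in>A. supp R V s x) \<longrightarrow> supp R V s (PDia f)" by (rule diaMono.IH(2))
  have hB: "B \<subseteq> {f}" by (rule diaMono.hyps(1))
  have fg: "supp R V t g" if tf: "supp R V t f" for t
  proof -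
    have "\<forall>x\<in>B. supp R V t x"
    proof
      fix x assume "x \<in> B"
      then have "x = f" using hB by auto
      then show "supp R V t x" using tf by simp
    qed
    then show ?thesis by (rule inst[OF ihB])
  qed
  show ?case
  proof (intro allI impI)
    fix s assume s: "\<forall>x\<in>A. supp R V s x"
    have "supp R V s (PDia f)" by (rule inst[OF ihA s])
    then have a: "\<forall>w\<in>s. \<exists>t. t \<noteq> {} \<and> t \<subseteq> R `` {w} \<and> supp R V t f" unfolding supp_dia .
    have "\<forall>w\<in>s. \<exists>t. t \<noteq> {} \<and> t \<subseteq> R `` {w} \<and> supp R V t g"
    proof
      fix w assume "w \<in> s"
      then obtain t where t: "t \<noteq> {}" "t \<subseteq> R `` {w}" "supp R V t f" using a by blast
      have "supp R V t g" by (rule fg[OF t(3)])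
      then show "\<exists>t. t \<noteq> {} \<and> t \<subseteq> R `` {w} \<and> supp R V t g" using t(1,2) by blast
    qed
    then show "supp R V s (PDia g)" unfolding supp_dia .
  qed
next
  case (diaNE A f g)
  show ?case
  proof (intro allI impI)
    fix s assume s: "\<forall>x\<in>A. supp R V s x"
    have a: "\<forall>w\<in>s. \<exists>t. t \<noteq> {} \<and> t \<subseteq> R `` {w} \<and> supp R V t (PDisj f (PConj g PNE))"
      using inst[OF diaNE.IH s] unfolding supp_dia .
    have "\<forall>w\<in>s. \<exists>t. t \<noteq> {} \<and> t \<subseteq> R `` {w} \<and> supp R V t g"
    proof
      fix w assume "w \<in> s"
      then obtain t where t: "t \<noteq> {}" "t \<subseteq> R `` {w}" "supp R V t (PDisj f (PConj g PNE))"
        using a by blast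
      then obtain t1 u where "t = t1 \<union> u" "supp R V u g" "u \<noteq> {}" by auto
      then show "\<exists>t. t \<noteq> {} \<and> t \<subseteq> R `` {w} \<and> supp R V t g" using t(2)
        by (intro exI[of _ u]) blast
    qed
    then show "supp R V s (PDia g)" by simp
  qed
next
  case (diaJoin A f B g)
  have ihA: "\<forall>s. (\<forall>x\<in>A. supp R V s x) \<longrightarrow> supp R V s (PDia f)" by (rule diaJoin.IH(1))
  have ihB: "\<forall>s. (\<forall>x\<in>B. supp R V s x) \<longrightarrow> supp R V s (PDia g)" by (rule diaJoin.IH(2))
  show ?case
  proof (intro allI impI)
    fix s assume s: "\<forall>x\<in>A \<union> B. supp R V s x"
    have sA: "\<forall>x\<in>A. supp R V s x" by (rule ball_UnD1[OF s])
    have sB: "\<forall>x\<in>B. supp R V s x" by (rule ball_UnD2[OF s])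
    have "supp R V s (PDia f)" by (rule inst[OF ihA sA])
    then have a: "\<forall>w\<in>s. \<exists>t. t \<noteq> {} \<and> t \<subseteq> R `` {w} \<and> supp R V t f" unfolding supp_dia .
    have "supp R V s (PDia g)" by (rule inst[OF ihB sB])
    then have b: "\<forall>w\<in>s. \<exists>t. t \<noteq> {} \<and> t \<subseteq> R `` {w} \<and> supp R V t g" unfolding supp_dia .
    have "\<forall>w\<in>s. \<exists>t. t \<noteq> {} \<and> t \<subseteq> R `` {w} \<and> supp R V t (PDisj f g)"
    proof
      fix w assume w: "w \<in> s"
      obtain t1 where t1: "t1 \<noteq> {}" "t1 \<subseteq> R `` {w}" "supp R V t1 f" using a w by blast
      obtain t2 where t2: "t2 \<noteq> {}" "t2 \<subseteq> R `` {w}" "supp R V t2 g" using b w by blast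
      have 1: "t1 \<union> t2 \<noteq> {}" using t1(1) by simp
      have 2: "t1 \<union> t2 \<subseteq> R `` {w}" using t1(2) t2(2) by simp
      have 3: "supp R V (t1 \<union> t2) (PDisj f g)" unfolding supp_disj
        by (rule exI[of _ t1], rule exI[of _ t2]) (simp add: t1(3) t2(3))
      show "\<exists>t. t \<noteq> {} \<and> t \<subseteq> R `` {w} \<and> supp R V t (PDisj f g)"
        by (rule exI[of _ "t1 \<union> t2"], rule HOL.conjI[OF 1 HOL.conjI[OF 2 3]])
    qed
    then show "supp R V s (PDia (PDisj f g))" unfolding supp_dia .
  qed
next
  case (boxNE A f)
  have ihA: "\<forall>s. (\<forall>x\<in>A. supp R V s x) \<longrightarrow> supp R V s (PBox (PConj f PNE))" by (rule boxNE.IH)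
  show ?case
  proof (intro allI impI)
    fix s assume s: "\<forall>x\<in>A. supp R V s x"
    have "supp R V s (PBox (PConj f PNE))" by (rule inst[OF ihA s])
    then have a: "\<forall>w\<in>s. supp R V (R `` {w}) f \<and> R `` {w} \<noteq> {}" by (simp add: supp_box)
    have "\<forall>w\<in>s. \<exists>t. t \<noteq> {} \<and> t \<subseteq> R `` {w} \<and> supp R V t f"
    proof
      fix w assume w: "w \<in> s"
      have "R `` {w} \<noteq> {} \<and> R `` {w} \<subseteq> R `` {w} \<and> supp R V (R `` {w}) f" using a w by simp
      then show "\<exists>t. t \<noteq> {} \<and> t \<subseteq> R `` {w} \<and> supp R V t f" by blast
    qed
    then show "supp R V s (PDia f)" unfolding supp_dia .
  qed
next
  case (boxDia A f B g)
  have ihA: "\<forall>s. (\<forall>x\<in>A. supp R V s x) \<longrightarrow> supp R V s (PBox f)" by (rule boxDia.IH(1))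
  have ihB: "\<forall>s. (\<forall>x\<in>B. supp R V s x) \<longrightarrow> supp R V s (PDia g)" by (rule boxDia.IH(2))
  show ?case
  proof (intro allI impI)
    fix s assume s: "\<forall>x\<in>A \<union> B. supp R V s x"
    have sA: "\<forall>x\<in>A. supp R V s x" by (rule ball_UnD1[OF s])
    have sB: "\<forall>x\<in>B. supp R V s x" by (rule ball_UnD2[OF s])
    have "supp R V s (PBox f)" by (rule inst[OF ihA sA])
    then have a: "\<forall>w\<in>s. supp R V (R `` {w}) f" unfolding supp_box .
    have "supp R V s (PDia g)" by (rule inst[OF ihB sB])
    then have b: "\<forall>w\<in>s. \<exists>t. t \<noteq> {} \<and> t \<subseteq> R `` {w} \<and> supp R V t g" unfolding supp_dia .
    have "\<forall>w\<in>s. supp R V (R `` {w}) (PDisj f g)"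
    proof
      fix w assume w: "w \<in> s"
      obtain t where t: "t \<noteq> {}" "t \<subseteq> R `` {w}" "supp R V t g" using b w by blast
      have rf: "supp R V (R `` {w}) f" using a w by simp
      have e: "R `` {w} = R `` {w} \<union> t" using t(2) by blast
      show "supp R V (R `` {w}) (PDisj f g)" unfolding supp_disj using e rf t(3) by blast
    qed
    then show "supp R V s (PBox (PDisj f g))" unfolding supp_box .
  qed
qed (auto simp: supp_box supp_bot PBBot_def)

theorem theorem4p25:
  fixes \<Phi> :: "form set" and \<psi> :: form
  assumes "derivable \<Phi> \<psi>"
  shows "entails TYPE('w) \<Phi> \<psi>"
  using assms sound unfolding derivable_def entails_def by blast

end
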